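(* Let $\varphi=(\mathfrak{m}_1,\dots,\mathfrak{m}_\ell)$ be normalizer-adapted. For every $1\le p\le\ell_0$ and $1\le i\le\ell$ we have $d_i=d_{\phi_p(i)}$ and $b_i=b_{\phi_p(i)}$.
   Context: $M=\mathsf{G}/\mathsf{H}$ almost-effective, $\mathsf{G},\mathsf{H}$ compact connected; $Q$ an $\mathrm{Ad}(\mathsf{G})$-invariant inner product on $\mathfrak{g}$, $\mathfrak{m}=\mathfrak{h}^{\perp_Q}$, $\mathfrak{m}_0=\{X\in\mathfrak{m}:[\mathfrak{h},X]=0\}$. $\varphi$ is an ordered $Q$-orthogonal decomposition of $\mathfrak{m}$ into irreducible $\mathrm{Ad}(\mathsf{H})$-modules with $\mathfrak{m}_0=\mathfrak{m}_1+\dots+\mathfrak{m}_{\ell_0}$, $\dim\mathfrak{m}_p=1$ for $p\le\ell_0$, $V_p\in\mathfrak{m}_p$ $Q$-unit. $d_i=\dim\mathfrak{m}_i$; $b_i\ge0$ is defined by $-\mathcal{B}_{\mathfrak{g}}|_{\mathfrak{m}_i\otimes\mathfrak{m}_i}=b_iQ|_{\mathfrak{m}_i\otimes\mathfrak{m}_i}$, $\mathcal{B}_{\mathfrak{g}}$ the Killing form. $[ijk]=\sum Q([e_\alpha,e_\beta],e_\gamma)^2$ over a $Q$-orthonormal adapted basis, $e_\alpha\in\mathfrak{m}_i$, $e_\beta\in\mathfrak{m}_j$, $e_\gamma\in\mathfrak{m}_k$. Normalizer-adapted: if $p\le\ell_0$ and $[\mathfrak{m}_p,\mathfrak{m}_i]\neq0$,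 then $[\mathfrak{m}_p,\mathfrak{m}_i]\cap\mathfrak{m}_j\neq0$ for some $j$. For such $\varphi$, let $I^0_p=\{i:\mathrm{ad}(V_p)|_{\mathfrak{m}_i}=0\}$, $I^+_p$ its complement; for $i\in I^+_p$ there is exactly one $j$ with $[pij]>0$, and $\phi_p(i)$ is defined as this $j$; $\phi_p(i)=i$ for $i\in I^0_p$. *)

theory Defs
  imports "HOL-Analysis.Analysis"
begin

text \<open>Lie-algebraic model: the Lie algebra g of G is a finite-dimensional real
inner product space 'g (inner product = Q) with a Lie bracket br.\<close>

definition lie_bracket :: "('g::euclidean_space \<Rightarrow> 'g \<Rightarrow> 'g) \<Rightarrow> bool" where
  "lie_bracket br \<longleftrightarrow> bilinear br \<and> (\<forall>X. br X X = 0) \<and>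
     (\<forall>X Y Z. br X (br Y Z) + br Y (br Z X) + br Z (br X Y) = 0)"

text \<open>Ad(G)-invariance of Q (G connected): ad(X) is Q-skew.\<close>
definition ad_invariant_ip :: "('g::euclidean_space \<Rightarrow> 'g \<Rightarrow> 'g) \<Rightarrow> bool" where
  "ad_invariant_ip br \<longleftrightarrow> (\<forall>X Y Z. br X Y \<bullet> Z = X \<bullet> br Y Z)"

definition subalgebra :: "('g::euclidean_space \<Rightarrow> 'g \<Rightarrow> 'g) \<Rightarrow> 'g set \<Rightarrow> bool" where
  "subalgebra br h \<longleftrightarrow> subspace h \<and> (\<forall>X\<in>h. \<forall>Y\<in>h. br X Y \<in> h)"

definition lie_ideal :: "('g::euclidean_space \<Rightarrow> 'g \<Rightarrow> 'g) \<Rightarrow> 'g set \<Rightarrow> bool" where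
  "lie_ideal br I \<longleftrightarrow> subspace I \<and> (\<forall>X. \<forall>Y\<in>I. br X Y \<in> I)"

definition almost_effective :: "('g::euclidean_space \<Rightarrow> 'g \<Rightarrow> 'g) \<Rightarrow> 'g set \<Rightarrow> bool" where
  "almost_effective br h \<longleftrightarrow> (\<forall>I. lie_ideal br I \<and> I \<subseteq> h \<longrightarrow> I = {0})"

definition ortho_compl :: "'g::euclidean_space set \<Rightarrow> 'g set" where
  "ortho_compl h = {X. \<forall>Y\<in>h. X \<bullet> Y = 0}"

definition h_invariant :: "('g::euclidean_space \<Rightarrow> 'g \<Rightarrow> 'g) \<Rightarrow> 'g set \<Rightarrow> 'g set \<Rightarrow> bool" where
  "h_invariant br h W \<longleftrightarrow> (\<forall>Y\<in>h. \<forall>X\<in>W. br Y X \<in> W)"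

text \<open>Irreducible Ad(H)-module (H connected: equivalently irreducible ad(h)-module).\<close>
definition irreducible_module :: "('g::euclidean_space \<Rightarrow> 'g \<Rightarrow> 'g) \<Rightarrow> 'g set \<Rightarrow> 'g set \<Rightarrow> bool" where
  "irreducible_module br h W \<longleftrightarrow> subspace W \<and> W \<noteq> {0} \<and> h_invariant br h W \<and>
     (\<forall>U. subspace U \<and> U \<subseteq> W \<and> h_invariant br h U \<longrightarrow> U = {0} \<or> U = W)"

definition killing :: "('g::euclidean_space \<Rightarrow> 'g \<Rightarrow> 'g) \<Rightarrow> 'g \<Rightarrow> 'g \<Rightarrow> real" where
  "killing br X Y = (\<Sum>b\<in>Basis. br X (br Y b) \<bullet> b)"

definition onb :: "'g::euclidean_space set \<Rightarrow> 'g set" where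
  "onb S = (SOME B. B \<subseteq> S \<and> pairwise orthogonal B \<and> (\<forall>x\<in>B. norm x = 1) \<and> span B = S)"

definition bcoef :: "('g::euclidean_space \<Rightarrow> 'g \<Rightarrow> 'g) \<Rightarrow> (nat \<Rightarrow> 'g set) \<Rightarrow> nat \<Rightarrow> nat \<Rightarrow> nat \<Rightarrow> real" where
  "bcoef br m i j k = (\<Sum>a\<in>onb (m i). \<Sum>b\<in>onb (m j). \<Sum>c\<in>onb (m k). (br a b \<bullet> c)^2)"

definition bscalar :: "('g::euclidean_space \<Rightarrow> 'g \<Rightarrow> 'g) \<Rightarrow> 'g set \<Rightarrow> real" where
  "bscalar br W = (THE b. \<forall>X\<in>W. \<forall>Y\<in>W. - killing br X Y = b * (X \<bullet> Y))"

definition bracket_space :: "('g::euclidean_space \<Rightarrow> 'g \<Rightarrow> 'g) \<Rightarrow> 'g set \<Rightarrow> 'g set \<Rightarrow> 'g set" where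
  "bracket_space br A B = span {br X Y | X Y. X \<in> A \<and> Y \<in> B}"

definition m0 :: "('g::euclidean_space \<Rightarrow> 'g \<Rightarrow> 'g) \<Rightarrow> 'g set \<Rightarrow> 'g set" where
  "m0 br h = {X \<in> ortho_compl h. \<forall>Y\<in>h. br Y X = 0}"

definition adapted_decomposition ::
  "('g::euclidean_space \<Rightarrow> 'g \<Rightarrow> 'g) \<Rightarrow> 'g set \<Rightarrow> nat \<Rightarrow> nat \<Rightarrow> (nat \<Rightarrow> 'g set) \<Rightarrow> bool" where
  "adapted_decomposition br h l l0 m \<longleftrightarrow> l0 \<le> l \<and>
     (\<forall>i\<in>{1..l}. irreducible_module br h (m i)) \<and>
     (\<forall>i\<in>{1..l}. \<forall>j\<in>{1..l}. i \<noteq> j \<longrightarrow> (\<forall>X\<in>m i. \<forall>Y\<in>m j. X \<bullet> Y = 0)) \<and>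
     span (\<Union>i\<in>{1..l}. m i) = ortho_compl h \<and>
     span (\<Union>i\<in>{1..l0}. m i) = m0 br h \<and>
     (\<forall>p\<in>{1..l0}. dim (m p) = 1)"

definition normalizer_adapted ::
  "('g::euclidean_space \<Rightarrow> 'g \<Rightarrow> 'g) \<Rightarrow> nat \<Rightarrow> nat \<Rightarrow> (nat \<Rightarrow> 'g set) \<Rightarrow> bool" where
  "normalizer_adapted br l l0 m \<longleftrightarrow>
     (\<forall>p\<in>{1..l0}. \<forall>i\<in>{1..l}. bracket_space br (m p) (m i) \<noteq> {0} \<longrightarrow>
        (\<exists>j\<in>{1..l}. bracket_space br (m p) (m i) \<inter> m j \<noteq> {0}))"

definition phi ::
  "('g::euclidean_space \<Rightarrow> 'g \<Rightarrow> 'g) \<Rightarrow> nat \<Rightarrow> (nat \<Rightarrow> 'g set) \<Rightarrow> (nat \<Rightarrow> 'g) \<Rightarrow> nat \<Rightarrow> nat \<Rightarrow> nat" where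
  "phi br l m V p i = (if (\<forall>X\<in>m i. br (V p) X = 0) then i
      else (THE j. j \<in> {1..l} \<and> bcoef br m p i j > 0))"

end

theory Submission
  imports Defs
begin

lemma lb_bil: "lie_bracket br \<Longrightarrow> bilinear br"
  by (simp add: lie_bracket_def)

lemma lb_linr: "lie_bracket br \<Longrightarrow> linear (br X)"
  by (simp add: lie_bracket_def bilinear_def)

lemma lb_linl: "lie_bracket br \<Longrightarrow> linear (\<lambda>X. br X Y)"
  by (simp add: lie_bracket_def bilinear_def)

lemma lb_anti:
  assumes "lie_bracket br" shows "br X Y = - br Y X"
proof -
  have b: "bilinear br" using assms by (simp add: lie_bracket_def)
  have "br (X+Y) (X+Y) = 0" "br X X = 0" "br Y Y = 0" using assms by (auto simp: lie_bracket_def)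
  then have "br Y X + br X Y = 0"
    by (simp add: bilinear_ladd[OF b] bilinear_radd[OF b])
  then show ?thesis by (metis add.commute eq_neg_iff_add_eq_0)
qed

lemma lb_jac:
  assumes "lie_bracket br"
  shows "br (br V X) Z = br V (br X Z) - br X (br V Z)"
proof -
  have "br V (br X Z) + br X (br Z V) + br Z (br V X) = 0"
    using assms by (simp add: lie_bracket_def)
  moreover have "br Z V = - br V Z" by (rule lb_anti[OF assms])
  moreover have "br Z (br V X) = - br (br V X) Z" by (rule lb_anti[OF assms])
  moreover have "br X (- br V Z) = - br X (br V Z)"
    using linear_neg[OF lb_linr[OF assms]] by simp
  ultimately show ?thesis by (simp add: algebra_simps)
qed

lemma trace_cyc:
  fixes A B :: "'g::euclidean_space \<Rightarrow> 'g"
  assumes "linear A" "linear B"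
  shows "(\<Sum>b\<in>Basis. A (B b) \<bullet> b) = (\<Sum>b\<in>Basis. B (A b) \<bullet> b)"
proof -
  have e1: "A (B b) \<bullet> b = (\<Sum>c\<in>Basis. (B b \<bullet> c) * (A c \<bullet> b))" for b
  proof -
    have "A (B b) = A (\<Sum>c\<in>Basis. (B b \<bullet> c) *\<^sub>R c)" by (simp add: euclidean_representation)
    also have "\<dots> = (\<Sum>c\<in>Basis. (B b \<bullet> c) *\<^sub>R A c)"
      using assms(1) by (simp add: linear_sum linear_scale)
    finally show ?thesis by (simp add: inner_sum_left)
  qed
  have e2: "B (A c) \<bullet> c = (\<Sum>b\<in>Basis. (A c \<bullet> b) * (B b \<bullet> c))" for c
  proof -
    have "B (A c) = B (\<Sum>b\<in>Basis. (A c \<bullet> b) *\<^sub>R b)" by (simp add: euclidean_representation)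
    also have "\<dots> = (\<Sum>b\<in>Basis. (A c \<bullet> b) *\<^sub>R B b)"
      using assms(2) by (simp add: linear_sum linear_scale)
    finally show ?thesis by (simp add: inner_sum_left)
  qed
  show ?thesis
    unfolding e1 e2 by (subst sum.swap) (simp add: mult.commute)
qed

lemma killing_inv:
  assumes "lie_bracket br"
  shows "killing br (br V X) Y = - killing br X (br V Y)"
proof -
  have lin: "linear (br Z)" for Z using lb_linr[OF assms] .
  have s1: "killing br (br V X) Y = (\<Sum>b\<in>Basis. br V (br X (br Y b)) \<bullet> b) - (\<Sum>b\<in>Basis. br X (br V (br Y b)) \<bullet> b)"
    unfolding killing_def lb_jac[OF assms] by (simp add: inner_diff_left sum_subtractf)
  have s2: "killing br X (br V Y) = (\<Sum>b\<in>Basis. br X (br V (br Y b)) \<bullet> b) - (\<Sum>b\<in>Basis. br X (br Y (br V b)) \<bullet> b)"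
    unfolding killing_def lb_jac[OF assms]
    using linear_diff[OF lin[of X]] by (simp add: inner_diff_left sum_subtractf)
  have c: "(\<Sum>b\<in>Basis. br V (br X (br Y b)) \<bullet> b) = (\<Sum>b\<in>Basis. br X (br Y (br V b)) \<bullet> b)"
    using trace_cyc[of "br V" "br X o br Y"] lin linear_compose[OF lin lin] by (simp add: o_def)
  show ?thesis using s1 s2 c by simp
qed

lemma mp_span:
  assumes AD: "adapted_decomposition br h l l0 m" and p: "p \<in> {1..l0}"
    and V: "V \<in> m p" "V \<noteq> 0"
  shows "m p = span {V}"
proof -
  have pl: "p \<in> {1..l}" using AD p by (auto simp: adapted_decomposition_def)
  have sub: "subspace (m p)" using AD pl by (auto simp: adapted_decomposition_def irreducible_module_def)
  have d: "dim (m p) = 1" using AD p by (auto simp: adapted_decomposition_def)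
  have "span {V} \<subseteq> m p" using V sub by (simp add: span_minimal)
  moreover have "dim (span {V}) = 1" using V by (simp add: dim_span dim_singleton)
  ultimately show ?thesis using subspace_dim_equal[of "span {V}" "m p"] sub d by auto
qed

lemma V_comm:
  assumes lb: "lie_bracket br" and AD: "adapted_decomposition br h l l0 m" and p: "p \<in> {1..l0}"
    and V: "V \<in> m p" and Y: "Y \<in> h"
  shows "br Y (br V X) = br V (br Y X)"
proof -
  have "m p \<subseteq> span (\<Union>i\<in>{1..l0}. m i)" using p by (intro subsetI span_base) auto
  then have "V \<in> m0 br h" using AD V by (auto simp: adapted_decomposition_def)
  then have "br Y V = 0" using Y by (auto simp: m0_def)
  moreover have "br 0 X = 0" using linear_0[OF lb_linl[OF lb]] by simp
  ultimately show ?thesis using lb_jac[OF lb, of Y V X] by simp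
qed

lemma key_image:
  assumes lb: "lie_bracket br" and AD: "adapted_decomposition br h l l0 m"
    and NA: "normalizer_adapted br l l0 m" and p: "p \<in> {1..l0}"
    and V: "V \<in> m p" "V \<noteq> 0" and q: "q \<in> {1..l}"
    and nz: "\<not> (\<forall>X\<in>m q. br V X = 0)"
  shows "\<exists>k\<in>{1..l}. br V ` m q = m k \<and> inj_on (br V) (m q)"
proof -
  have irr: "\<And>i. i \<in> {1..l} \<Longrightarrow> irreducible_module br h (m i)"
    using AD by (auto simp: adapted_decomposition_def)
  have subq: "subspace (m q)" and invq: "h_invariant br h (m q)"
    and irrq: "\<And>U. subspace U \<Longrightarrow> U \<subseteq> m q \<Longrightarrow> h_invariant br h U \<Longrightarrow> U = {0} \<or> U = m q"
    using irr[OF q] by (auto simp: irreducible_module_def)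
  have lin: "linear (br V)" using lb_linr[OF lb] .
  have comm: "\<And>Y X. Y \<in> h \<Longrightarrow> br Y (br V X) = br V (br Y X)"
    using V_comm[OF lb AD p V(1)] by blast
  have mp: "m p = span {V}" using mp_span[OF AD p V] .
  have bs: "bracket_space br (m p) (m q) = br V ` m q"
  proof -
    have "{br X Y | X Y. X \<in> m p \<and> Y \<in> m q} = br V ` m q"
    proof (intro equalityI subsetI)
      fix Z assume "Z \<in> {br X Y | X Y. X \<in> m p \<and> Y \<in> m q}"
      then obtain t Y where "Y \<in> m q" "Z = br (t *\<^sub>R V) Y"
        unfolding mp span_singleton by auto
      then have "Z = br V (t *\<^sub>R Y)" "t *\<^sub>R Y \<in> m q"
        using bilinear_lmul[OF lb_bil[OF lb]] bilinear_rmul[OF lb_bil[OF lb]] subq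
        by (auto simp: subspace_scale)
      then show "Z \<in> br V ` m q" by auto
    next
      fix Z assume "Z \<in> br V ` m q"
      moreover have "V \<in> m p" using V by simp
      ultimately show "Z \<in> {br X Y | X Y. X \<in> m p \<and> Y \<in> m q}" by blast
    qed
    moreover have "subspace (br V ` m q)" by (rule linear_subspace_image[OF lin subq])
    ultimately show ?thesis unfolding bracket_space_def by simp
  qed
  have bnz: "bracket_space br (m p) (m q) \<noteq> {0}" unfolding bs using nz by auto
  have na: "bracket_space br (m p) (m q) \<noteq> {0} \<longrightarrow> (\<exists>j\<in>{1..l}. bracket_space br (m p) (m q) \<inter> m j \<noteq> {0})"
    using NA p q unfolding normalizer_adapted_def by blast
  obtain k where k: "k \<in> {1..l}" and ne: "br V ` m q \<inter> m k \<noteq> {0}"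
    using na bnz unfolding bs by blast
  have subk: "subspace (m k)" and invk: "h_invariant br h (m k)"
    and irrk: "\<And>U. subspace U \<Longrightarrow> U \<subseteq> m k \<Longrightarrow> h_invariant br h U \<Longrightarrow> U = {0} \<or> U = m k"
    using irr[OF k] by (auto simp: irreducible_module_def)
  have "0 \<in> br V ` m q \<inter> m k" using subq subk linear_0[OF lin] by (auto simp: subspace_0)
  with ne obtain X0 where X0: "X0 \<in> m q" "br V X0 \<in> m k" "br V X0 \<noteq> 0" by blast
  define U where "U = {X \<in> m q. br V X \<in> m k}"
  have subU: "subspace U" unfolding U_def subspace_def
    using subq subk linear_add[OF lin] linear_scale[OF lin] linear_0[OF lin]
    by (auto simp: subspace_def)
  have invU: "h_invariant br h U" unfolding U_def h_invariant_def
  proof (intro ballI)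
    fix Y X assume Y: "Y \<in> h" and X: "X \<in> {X \<in> m q. br V X \<in> m k}"
    have "br Y X \<in> m q" using invq Y X unfolding h_invariant_def by auto
    moreover have "br Y (br V X) \<in> m k" using invk Y X unfolding h_invariant_def by auto
    then have "br V (br Y X) \<in> m k" using comm[OF Y, of X] by simp
    ultimately show "br Y X \<in> {X \<in> m q. br V X \<in> m k}" by auto
  qed
  have X0U: "X0 \<in> U" using X0 unfolding U_def by simp
  have X0nz: "X0 \<noteq> 0" using X0(3) linear_0[OF lin] by auto
  have "U \<noteq> {0}" using X0U X0nz by blast
  moreover have "U \<subseteq> m q" unfolding U_def by blast
  ultimately have "U = m q" using irrq[OF subU _ invU] by blast
  then have imk: "br V ` m q \<subseteq> m k" unfolding U_def by blast
  have "subspace (br V ` m q)" by (rule linear_subspace_image[OF lin subq])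
  moreover have "h_invariant br h (br V ` m q)" unfolding h_invariant_def
  proof (intro ballI)
    fix Y Z assume Y: "Y \<in> h" and "Z \<in> br V ` m q"
    then obtain X where X: "X \<in> m q" "Z = br V X" by blast
    have "br Y X \<in> m q" using invq Y X(1) unfolding h_invariant_def by blast
    then have "br V (br Y X) \<in> br V ` m q" by blast
    then show "br Y Z \<in> br V ` m q" using comm[OF Y, of X] X(2) by simp
  qed
  moreover have "br V ` m q \<noteq> {0}" using X0 by auto
  ultimately have img: "br V ` m q = m k" using irrk imk by blast
  define K where "K = {X \<in> m q. br V X = 0}"
  have subK: "subspace K" unfolding K_def subspace_def
    using subq linear_add[OF lin] linear_scale[OF lin] linear_0[OF lin]
    by (auto simp: subspace_def)
  have invK: "h_invariant br h K" unfolding K_def h_invariant_def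
  proof (intro ballI)
    fix Y X assume Y: "Y \<in> h" and X: "X \<in> {X \<in> m q. br V X = 0}"
    have "br Y X \<in> m q" using invq Y X unfolding h_invariant_def by auto
    moreover have "br Y (br V X) = 0" using X linear_0[OF lb_linr[OF lb]] by auto
    then have "br V (br Y X) = 0" using comm[OF Y, of X] by simp
    ultimately show "br Y X \<in> {X \<in> m q. br V X = 0}" by auto
  qed
  have "K \<noteq> m q" using nz unfolding K_def by blast
  moreover have "K \<subseteq> m q" unfolding K_def by blast
  ultimately have K0: "K = {0}" using irrq[OF subK _ invK] by blast
  have "\<forall>x\<in>m q. br V x = 0 \<longrightarrow> x = 0"
  proof (intro ballI impI)
    fix x assume "x \<in> m q" "br V x = 0"
    then have "x \<in> K" unfolding K_def by blast
    then show "x = 0" using K0 by blast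
  qed
  then have "inj_on (br V) (m q)"
    using linear_inj_on_iff_eq_0[OF lin subq] by blast
  then show ?thesis using img k by blast
qed

lemma ip_skew:
  assumes lb: "lie_bracket br" and ip: "ad_invariant_ip br"
  shows "br V X \<bullet> Z = - (X \<bullet> br V Z)"
proof -
  have "br V X = - br X V" using lb_anti[OF lb] .
  moreover have "br X V \<bullet> Z = X \<bullet> br V Z" using ip by (simp add: ad_invariant_ip_def)
  ultimately show ?thesis by simp
qed

lemma transfer_kill:
  assumes lb: "lie_bracket br" and ip: "ad_invariant_ip br"
    and img: "br V ` A = C" and bk: "br V ` C \<subseteq> A"
    and P: "\<forall>X\<in>A. \<forall>Y\<in>A. - killing br X Y = b * (X \<bullet> Y)"
  shows "\<forall>X\<in>C. \<forall>Y\<in>C. - killing br X Y = b * (X \<bullet> Y)"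
proof (intro ballI)
  fix Y Y' assume "Y \<in> C" "Y' \<in> C"
  then obtain X X' where X: "X \<in> A" "X' \<in> A" "Y = br V X" "Y' = br V X'"
    using img by auto
  have W: "br V (br V X') \<in> A" using bk X img by auto
  have k: "- killing br (br V X) (br V X') = killing br X (br V (br V X'))"
    using killing_inv[OF lb, of V X "br V X'"] by simp
  have i: "br V X \<bullet> br V X' = - (X \<bullet> br V (br V X'))" using ip_skew[OF lb ip] .
  have e0: "- killing br X (br V (br V X')) = b * (X \<bullet> br V (br V X'))"
    using P X(1) W by blast
  have e: "killing br X (br V (br V X')) = - (b * (X \<bullet> br V (br V X')))"
    using arg_cong[OF e0, of uminus] by simp
  have "- killing br Y Y' = killing br X (br V (br V X'))" using k X(3,4) by simp
  also have "\<dots> = - (b * (X \<bullet> br V (br V X')))" by (rule e)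
  also have "\<dots> = b * (Y \<bullet> Y')" using i X(3,4) by simp
  finally show "- killing br Y Y' = b * (Y \<bullet> Y')" .
qed

lemma onb_props:
  fixes S :: "'g::euclidean_space set"
  assumes "subspace S"
  shows "onb S \<subseteq> S" "pairwise orthogonal (onb S)" "\<forall>x\<in>onb S. norm x = 1"
    "span (onb S) = S" "finite (onb S)"
proof -
  obtain B where "B \<subseteq> S" "pairwise orthogonal B" "\<And>x. x\<in>B \<Longrightarrow> norm x = 1" "span B = S"
    using orthonormal_basis_subspace[OF assms] by metis
  then have "\<exists>B. B \<subseteq> S \<and> pairwise orthogonal B \<and> (\<forall>x\<in>B. norm x = 1) \<and> span B = S" by blast
  then have H: "onb S \<subseteq> S \<and> pairwise orthogonal (onb S) \<and> (\<forall>x\<in>onb S. norm x = 1) \<and> span (onb S) = S"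
    unfolding onb_def by (rule someI_ex)
  then show "onb S \<subseteq> S" "pairwise orthogonal (onb S)" "\<forall>x\<in>onb S. norm x = 1"
    "span (onb S) = S" by auto
  show "finite (onb S)" using H by (meson pairwise_orthogonal_imp_finite)
qed

lemma phi_val:
  assumes lb: "lie_bracket br" and AD: "adapted_decomposition br h l l0 m"
    and p: "p \<in> {1..l0}" and V: "Vf p \<in> m p" "Vf p \<noteq> 0" and i: "i \<in> {1..l}"
    and nz: "\<not> (\<forall>X\<in>m i. br (Vf p) X = 0)" and k: "k \<in> {1..l}"
    and img: "br (Vf p) ` m i = m k"
  shows "phi br l m Vf p i = k"
proof -
  define V where "V = Vf p"
  have irr: "\<And>j. j \<in> {1..l} \<Longrightarrow> irreducible_module br h (m j)"
    using AD by (auto simp: adapted_decomposition_def)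
  have sub: "\<And>j. j \<in> {1..l} \<Longrightarrow> subspace (m j)"
    using irr by (auto simp: irreducible_module_def)
  have orth: "\<And>a c X Y. a \<in> {1..l} \<Longrightarrow> c \<in> {1..l} \<Longrightarrow> a \<noteq> c \<Longrightarrow> X \<in> m a \<Longrightarrow> Y \<in> m c \<Longrightarrow> X \<bullet> Y = 0"
  proof -
    have "\<forall>i\<in>{1..l}. \<forall>j\<in>{1..l}. i \<noteq> j \<longrightarrow> (\<forall>X\<in>m i. \<forall>Y\<in>m j. X \<bullet> Y = 0)"
      using AD[unfolded adapted_decomposition_def] by (elim conjE) assumption
    then show "\<And>a c X Y. a \<in> {1..l} \<Longrightarrow> c \<in> {1..l} \<Longrightarrow> a \<noteq> c \<Longrightarrow> X \<in> m a \<Longrightarrow> Y \<in> m c \<Longrightarrow> X \<bullet> Y = 0"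
      by blast
  qed
  have pl: "p \<in> {1..l}" using AD p by (auto simp: adapted_decomposition_def)
  have mp: "m p = span {V}" unfolding V_def using mp_span[OF AD p V] .
  have lin: "linear (br V)" using lb_linr[OF lb] .
  have smul: "br (t *\<^sub>R V) Y = t *\<^sub>R br V Y" for t Y
    using bilinear_lmul[OF lb_bil[OF lb]] by blast
  have inmk: "br a b \<in> m k" if a: "a \<in> m p" and b: "b \<in> m i" for a b
  proof -
    obtain t where t: "a = t *\<^sub>R V" using a unfolding mp span_singleton by auto
    have "br V b \<in> br V ` m i" using b by (rule imageI)
    then have "br V b \<in> m k" unfolding V_def img .
    then show ?thesis unfolding t smul using sub[OF k] by (simp add: subspace_scale)
  qed
  note op = onb_props[OF sub[OF pl]] onb_props[OF sub[OF i]] onb_props[OF sub[OF k]]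
  have uniq: "j = k" if j: "j \<in> {1..l}" and pos: "bcoef br m p i j > 0" for j
  proof (rule ccontr)
    assume jk: "j \<noteq> k"
    note oj = onb_props[OF sub[OF j]]
    have "bcoef br m p i j = 0" unfolding bcoef_def
    proof (intro sum.neutral ballI)
      fix a b c assume a: "a \<in> onb (m p)" and b: "b \<in> onb (m i)" and c: "c \<in> onb (m j)"
      have am: "a \<in> m p" using a op(1) by blast
      have bm: "b \<in> m i" using b op(6) by blast
      have cm: "c \<in> m j" using c oj(1) by blast
      have "br a b \<bullet> c = 0" using orth[OF k j _ inmk[OF am bm] cm] jk by simp
      then show "(br a b \<bullet> c)\<^sup>2 = 0" by simp
    qed
    then show False using pos by simp
  qed
  have pos: "bcoef br m p i k > 0"
  proof -
    have "onb (m p) \<noteq> {}"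
    proof
      assume "onb (m p) = {}"
      then have "m p = {0}" using op(4) by simp
      then show False using V by auto
    qed
    then obtain a0 where a0: "a0 \<in> onb (m p)" by blast
    have a0m: "a0 \<in> m p" using a0 op(1) by blast
    have a0nz: "a0 \<noteq> 0" using a0 op(3) by auto
    obtain t where t: "a0 = t *\<^sub>R V" using a0m unfolding mp span_singleton by auto
    have tnz: "t \<noteq> 0" using a0nz t by auto
    obtain b0 where b0: "b0 \<in> onb (m i)" and b0nz: "br a0 b0 \<noteq> 0"
    proof -
      have "\<exists>b0\<in>onb (m i). br a0 b0 \<noteq> 0"
      proof (rule ccontr)
        assume "\<not> ?thesis"
        then have z: "\<And>x. x \<in> onb (m i) \<Longrightarrow> br a0 x = 0" by blast
        have "\<forall>X\<in>m i. br V X = 0"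
        proof
          fix X assume X: "X \<in> m i"
          then have "X \<in> span (onb (m i))" using op(9) by simp
          then have "br a0 X = 0" using linear_eq_0_on_span[OF lb_linr[OF lb] z] by blast
          then show "br V X = 0" using tnz unfolding t smul by simp
        qed
        then show False using nz unfolding V_def by blast
      qed
      then show ?thesis using that by blast
    qed
    have b0m: "b0 \<in> m i" using b0 op(6) by blast
    have abk: "br a0 b0 \<in> m k" using inmk[OF a0m b0m] .
    obtain c0 where c0: "c0 \<in> onb (m k)" and c0nz: "br a0 b0 \<bullet> c0 \<noteq> 0"
    proof -
      have "\<exists>c0\<in>onb (m k). br a0 b0 \<bullet> c0 \<noteq> 0"
      proof (rule ccontr)
        assume "\<not> ?thesis"
        then have z: "\<And>y. y \<in> onb (m k) \<Longrightarrow> orthogonal (br a0 b0) y"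
          unfolding orthogonal_def by blast
        have "br a0 b0 \<in> span (onb (m k))" using abk op(14) by simp
        then have "orthogonal (br a0 b0) (br a0 b0)" using orthogonal_to_span z by blast
        then show False using b0nz by (simp add: orthogonal_self)
      qed
      then show ?thesis using that by blast
    qed
    have fin: "finite (onb (m p))" "finite (onb (m i))" "finite (onb (m k))"
      using op(5) op(10) op(15) by auto
    have p3: "0 < (br a0 b0 \<bullet> c0)\<^sup>2" using c0nz by simp
    have n3: "\<And>c. c \<in> onb (m k) \<Longrightarrow> 0 \<le> (br a0 b0 \<bullet> c)\<^sup>2" by simp
    have s3: "0 < (\<Sum>c\<in>onb (m k). (br a0 b0 \<bullet> c)\<^sup>2)"
      using sum_pos2[OF fin(3) c0, of "\<lambda>c. (br a0 b0 \<bullet> c)\<^sup>2", OF p3 n3] .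
    have n2: "\<And>b. b \<in> onb (m i) \<Longrightarrow> 0 \<le> (\<Sum>c\<in>onb (m k). (br a0 b \<bullet> c)\<^sup>2)"
      by (rule sum_nonneg) simp
    have s2: "0 < (\<Sum>b\<in>onb (m i). \<Sum>c\<in>onb (m k). (br a0 b \<bullet> c)\<^sup>2)"
      using sum_pos2[OF fin(2) b0, of "\<lambda>b. \<Sum>c\<in>onb (m k). (br a0 b \<bullet> c)\<^sup>2", OF s3 n2] .
    have n1: "\<And>a. a \<in> onb (m p) \<Longrightarrow> 0 \<le> (\<Sum>b\<in>onb (m i). \<Sum>c\<in>onb (m k). (br a b \<bullet> c)\<^sup>2)"
      by (rule sum_nonneg, rule sum_nonneg) simp
    have "0 < (\<Sum>a\<in>onb (m p). \<Sum>b\<in>onb (m i). \<Sum>c\<in>onb (m k). (br a b \<bullet> c)\<^sup>2)"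
      using sum_pos2[OF fin(1) a0, of "\<lambda>a. \<Sum>b\<in>onb (m i). \<Sum>c\<in>onb (m k). (br a b \<bullet> c)\<^sup>2", OF s2 n1] .
    then show ?thesis unfolding bcoef_def .
  qed
  have "(THE j. j \<in> {1..l} \<and> bcoef br m p i j > 0) = k"
  proof (rule the_equality)
    show "k \<in> {1..l} \<and> bcoef br m p i k > 0" using k pos by blast
  next
    fix j assume "j \<in> {1..l} \<and> bcoef br m p i j > 0"
    then show "j = k" using uniq by blast
  qed
  then show ?thesis unfolding phi_def if_not_P[OF nz] .
qed

theorem lemma5p3:
  fixes br :: "'g::euclidean_space \<Rightarrow> 'g \<Rightarrow> 'g"
    and h :: "'g set" and m :: "nat \<Rightarrow> 'g set" and V :: "nat \<Rightarrow> 'g"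
    and l l0 p i :: nat
  assumes "lie_bracket br"
    and "ad_invariant_ip br"
    and "subalgebra br h"
    and "almost_effective br h"
    and "adapted_decomposition br h l l0 m"
    and "\<forall>q\<in>{1..l0}. V q \<in> m q \<and> norm (V q) = 1"
    and "normalizer_adapted br l l0 m"
    and "p \<in> {1..l0}" and "i \<in> {1..l}"
  shows "dim (m i) = dim (m (phi br l m V p i)) \<and>
         bscalar br (m i) = bscalar br (m (phi br l m V p i))"
proof -
  note lb = assms(1) and ip = assms(2) and AD = assms(5) and NA = assms(7)
    and p = assms(8) and i = assms(9)
  have n: "V p \<in> m p \<and> norm (V p) = 1" using assms(6) p by blast
  then have Vp: "V p \<in> m p" "V p \<noteq> 0" by auto
  show ?thesis
  proof (cases "\<forall>X\<in>m i. br (V p) X = 0")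
    case True
    then have "phi br l m V p i = i" unfolding phi_def by simp
    then show ?thesis by simp
  next
    case False
    obtain k where k: "k \<in> {1..l}" and img: "br (V p) ` m i = m k"
      and inj: "inj_on (br (V p)) (m i)"
      using key_image[OF lb AD NA p Vp i False] by blast
    have ph: "phi br l m V p i = k" using phi_val[where Vf=V, OF lb AD p Vp i False k img] .
    have irr: "\<And>j. j \<in> {1..l} \<Longrightarrow> irreducible_module br h (m j)"
      using AD by (auto simp: adapted_decomposition_def)
    have sub: "\<And>j. j \<in> {1..l} \<Longrightarrow> subspace (m j)"
      using irr by (auto simp: irreducible_module_def)
    have orth: "\<And>a c X Y. a \<in> {1..l} \<Longrightarrow> c \<in> {1..l} \<Longrightarrow> a \<noteq> c \<Longrightarrow> X \<in> m a \<Longrightarrow> Y \<in> m c \<Longrightarrow> X \<bullet> Y = 0"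
    proof -
      have "\<forall>i\<in>{1..l}. \<forall>j\<in>{1..l}. i \<noteq> j \<longrightarrow> (\<forall>X\<in>m i. \<forall>Y\<in>m j. X \<bullet> Y = 0)"
        using AD[unfolded adapted_decomposition_def] by (elim conjE) assumption
      then show "\<And>a c X Y. a \<in> {1..l} \<Longrightarrow> c \<in> {1..l} \<Longrightarrow> a \<noteq> c \<Longrightarrow> X \<in> m a \<Longrightarrow> Y \<in> m c \<Longrightarrow> X \<bullet> Y = 0"
        by blast
    qed
    have lin: "linear (br (V p))" using lb_linr[OF lb] .
    have spi: "span (m i) = m i" using sub[OF i] by simp
    have "dim (br (V p) ` m i) = dim (m i)"
      by (rule dim_image_eq[OF lin]) (simp only: spi inj)
    then have d: "dim (m i) = dim (m k)" unfolding img by (rule sym)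
    obtain X where X: "X \<in> m i" "br (V p) X \<noteq> 0" using False by blast
    define Y where "Y = br (V p) X"
    have "Y \<in> br (V p) ` m i" unfolding Y_def using X(1) by (rule imageI)
    then have Yk: "Y \<in> m k" unfolding img .
    have "br (V p) Y \<bullet> X = - (Y \<bullet> Y)" unfolding Y_def using ip_skew[OF lb ip] .
    then have YX: "br (V p) Y \<bullet> X \<noteq> 0" using X(2) unfolding Y_def by simp
    have nzk: "\<not> (\<forall>Z\<in>m k. br (V p) Z = 0)"
    proof
      assume "\<forall>Z\<in>m k. br (V p) Z = 0"
      then have "br (V p) Y = 0" using Yk by blast
      then show False using YX by simp
    qed
    obtain k' where k': "k' \<in> {1..l}" and img': "br (V p) ` m k = m k'"
      using key_image[OF lb AD NA p Vp k nzk] by blast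
    have "br (V p) Y \<in> br (V p) ` m k" using Yk by (rule imageI)
    then have "br (V p) Y \<in> m k'" unfolding img' .
    then have "k' = i"
    proof (rule contrapos_pp)
      assume "k' \<noteq> i"
      then have "br (V p) Y \<bullet> X = 0" using orth[OF k' i] \<open>br (V p) Y \<in> m k'\<close> X(1) by blast
      then show "br (V p) Y \<notin> m k'" using YX by simp
    qed
    then have img2: "br (V p) ` m k = m i" using img' by simp
    have "(\<lambda>b. \<forall>X\<in>m i. \<forall>Y\<in>m i. - killing br X Y = b * (X \<bullet> Y))
        = (\<lambda>b. \<forall>X\<in>m k. \<forall>Y\<in>m k. - killing br X Y = b * (X \<bullet> Y))"
    proof (rule ext, rule iffI)
      fix b assume "\<forall>X\<in>m i. \<forall>Y\<in>m i. - killing br X Y = b * (X \<bullet> Y)"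
      then show "\<forall>X\<in>m k. \<forall>Y\<in>m k. - killing br X Y = b * (X \<bullet> Y)"
        by (rule transfer_kill[OF lb ip img equalityD1[OF img2]])
    next
      fix b assume "\<forall>X\<in>m k. \<forall>Y\<in>m k. - killing br X Y = b * (X \<bullet> Y)"
      then show "\<forall>X\<in>m i. \<forall>Y\<in>m i. - killing br X Y = b * (X \<bullet> Y)"
        by (rule transfer_kill[OF lb ip img2 equalityD1[OF img]])
    qed
    then have "bscalar br (m i) = bscalar br (m k)" unfolding bscalar_def by (rule arg_cong[where f=The])
    then show ?thesis using d ph by simp
  qed
qed

end
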